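(* Let $X,Y$ be mm-spaces and $F\in\mathcal F^2$. Then for every $\kappa\in(0,1)$ and $\kappa'\in(0,1/4)$, $$\mathrm{OD}(X\times_F Y;-2(\kappa+\kappa'))\le 4F(\mathrm{OD}(X;-\kappa),0)+8F(0,\mathrm{OD}(Y;-\kappa')).$$
   Context: An mm-space is a triple $(X,d_X,m_X)$ with $(X,d_X)$ complete separable metric space and $m_X$ a Borel probability measure. $\mathcal F^2$ is the set of continuous functions $F\colon[0,+\infty)^2\to[0,+\infty)$ such that for any metric spaces $(X,d_X),(Y,d_Y)$, $d_F((x,y),(x',y')):=F(d_X(x,x'),d_Y(y,y'))$ is a metric on $X\times Y$; $X\times_FY:=(X\times Y,d_F,m_X\otimes m_Y)$. Partial diameter: $\mathrm{PD}(X;\alpha)$ = infimum of $\operatorname{diam}A$ over Borel $A$ with $m_X(A)\ge\alpha$. Observable diameter: $\mathrm{OD}(X;-\kappa):=\sup_f\mathrm{PD}((\mathbb R,|\cdot|,f_*m_X);1-\kappa)$ over 1-Lipschitz $f\colon X\to\mathbb R$. *)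

theory Defs
  imports "HOL-Analysis.Analysis" "HOL-Probability.Probability"
begin

definition borel_sets_metric :: "'a set \<Rightarrow> ('a \<Rightarrow> 'a \<Rightarrow> real) \<Rightarrow> 'a set set" where
  "borel_sets_metric S d = sigma_sets S {U. openin (Metric_space.mtopology S d) U}"

definition mm_space :: "'a set \<Rightarrow> ('a \<Rightarrow> 'a \<Rightarrow> real) \<Rightarrow> 'a measure \<Rightarrow> bool" where
  "mm_space S d m \<longleftrightarrow>
     Metric_space S d \<and> Metric_space.mcomplete S d \<and>
     separable_space (Metric_space.mtopology S d) \<and>
     space m = S \<and> sets m = borel_sets_metric S d \<and> prob_space m"

definition prod_metric ::
  "(real \<Rightarrow> real \<Rightarrow> real) \<Rightarrow> ('a \<Rightarrow> 'a \<Rightarrow> real) \<Rightarrow> ('b \<Rightarrow> 'b \<Rightarrow> real)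
     \<Rightarrow> ('a \<times> 'b) \<Rightarrow> ('a \<times> 'b) \<Rightarrow> real" where
  "prod_metric F dX dY p q = F (dX (fst p) (fst q)) (dY (snd p) (snd q))"

text \<open>The class F^2. Metric spaces are quantified over carriers that are subsets of the
  reals with arbitrary metric functions.\<close>
definition F2 :: "(real \<Rightarrow> real \<Rightarrow> real) set" where
  "F2 = {F. continuous_on ({0..} \<times> {0..}) (\<lambda>(s,t). F s t) \<and>
            (\<forall>s\<ge>0. \<forall>t\<ge>0. F s t \<ge> 0) \<and>
            (\<forall>(S::real set) dS (T::real set) dT.
               Metric_space S dS \<and> Metric_space T dT \<longrightarrow>
               Metric_space (S \<times> T) (prod_metric F dS dT))}"

definition diam_of :: "('a \<Rightarrow> 'a \<Rightarrow> real) \<Rightarrow> 'a set \<Rightarrow> ereal" where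
  "diam_of d A = Sup ({0} \<union> {ereal (d x y) | x y. x \<in> A \<and> y \<in> A})"

definition partial_diam :: "('a \<Rightarrow> 'a \<Rightarrow> real) \<Rightarrow> 'a measure \<Rightarrow> real \<Rightarrow> ereal" where
  "partial_diam d m \<alpha> = Inf {diam_of d A | A. A \<in> sets m \<and> measure m A \<ge> \<alpha>}"

definition obs_diam :: "'a set \<Rightarrow> ('a \<Rightarrow> 'a \<Rightarrow> real) \<Rightarrow> 'a measure \<Rightarrow> real \<Rightarrow> ereal" where
  "obs_diam S d m \<kappa> =
     (SUP f \<in> {f. f \<in> borel_measurable m \<and> (\<forall>x\<in>S. \<forall>y\<in>S. \<bar>f x - f y\<bar> \<le> d x y)}.
        partial_diam (\<lambda>a b. \<bar>a - b\<bar>) (distr m borel f) (1 - \<kappa>))"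

end

theory Submission
  imports Defs
begin

lemma mm_meas_cont:
  fixes h :: "'a \<Rightarrow> real"
  assumes mm: "mm_space S d m"
    and c: "\<forall>x\<in>S. \<forall>e>0. \<exists>\<delta>>0. \<forall>y\<in>S. d x y < \<delta> \<longrightarrow> \<bar>h y - h x\<bar> < e"
  shows "h \<in> borel_measurable m"
proof (rule borel_measurableI)
  fix U :: "real set" assume U: "open U"
  interpret Metric_space S d using mm by (simp add: mm_space_def)
  have sp: "space m = S" and ss: "sets m = borel_sets_metric S d" using mm by (auto simp: mm_space_def)
  have "openin mtopology (h -` U \<inter> S)"
    unfolding openin_mtopology
  proof (intro conjI allI impI)
    fix x assume x: "x \<in> h -` U \<inter> S"
    then obtain e where e: "e > 0" "ball (h x) e \<subseteq> U" using U open_contains_ball by blast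
    then obtain \<delta> where "\<delta> > 0" "\<forall>y\<in>S. d x y < \<delta> \<longrightarrow> \<bar>h y - h x\<bar> < e" using c x by blast
    then show "\<exists>r>0. mball x r \<subseteq> h -` U \<inter> S"
      using e by (intro exI[of _ \<delta>]) (auto simp: dist_real_def abs_minus_commute subset_iff)
  qed auto
  then show "h -` U \<inter> space m \<in> sets m"
    unfolding sp ss borel_sets_metric_def by (auto intro: sigma_sets.Basic)
qed


lemma diam_le: "x \<in> A \<Longrightarrow> y \<in> A \<Longrightarrow> ereal (d x y) \<le> diam_of d A"
  unfolding diam_of_def by (rule Sup_upper) blast

lemma diam_ge0: "0 \<le> diam_of d A"
  unfolding diam_of_def by (rule Sup_upper) blast

lemma diam_interval:
  assumes "0 \<le> w"
  shows "diam_of (\<lambda>a b. \<bar>a - b\<bar>) {c-w..c+w} \<le> ereal (2*w)"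
  unfolding diam_of_def using assms by (intro Sup_least) auto

lemma PD_le: "A \<in> sets \<mu> \<Longrightarrow> \<alpha> \<le> measure \<mu> A \<Longrightarrow> partial_diam d \<mu> \<alpha> \<le> diam_of d A"
  unfolding partial_diam_def by (rule Inf_lower) blast

lemma PD_ge0: "0 \<le> partial_diam d \<mu> \<alpha>"
  unfolding partial_diam_def by (rule Inf_greatest) (auto simp: diam_ge0)

lemma PD_lt: "partial_diam d \<mu> \<alpha> < \<rho> \<Longrightarrow> \<exists>A\<in>sets \<mu>. \<alpha> \<le> measure \<mu> A \<and> diam_of d A < \<rho>"
  unfolding partial_diam_def by (auto simp: Inf_less_iff)

lemma OD_ge:
  "f \<in> borel_measurable m \<Longrightarrow> (\<forall>x\<in>S. \<forall>y\<in>S. \<bar>f x - f y\<bar> \<le> d x y) \<Longrightarrow>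
   partial_diam (\<lambda>a b. \<bar>a - b\<bar>) (distr m borel f) (1 - \<kappa>) \<le> obs_diam S d m \<kappa>"
  unfolding obs_diam_def by (rule SUP_upper) blast

lemma OD_le:
  "(\<And>f. f \<in> borel_measurable m \<Longrightarrow> (\<forall>x\<in>S. \<forall>y\<in>S. \<bar>f x - f y\<bar> \<le> d x y) \<Longrightarrow>
   partial_diam (\<lambda>a b. \<bar>a - b\<bar>) (distr m borel f) (1 - \<kappa>) \<le> B) \<Longrightarrow> obs_diam S d m \<kappa> \<le> B"
  unfolding obs_diam_def by (rule SUP_least) blast

lemma OD_ge0:
  assumes "mm_space S d m" shows "0 \<le> obs_diam S d m \<kappa>"
proof -
  interpret Metric_space S d using assms by (simp add: mm_space_def)
  have "0 \<le> partial_diam (\<lambda>a b. \<bar>a - b\<bar>) (distr m borel (\<lambda>_. 0::real)) (1 - \<kappa>)" by (rule PD_ge0)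
  also have "\<dots> \<le> obs_diam S d m \<kappa>" by (rule OD_ge) auto
  finally show ?thesis .
qed

lemma L0:
  assumes mm: "mm_space S d m" and k: "obs_diam S d m \<kappa> \<le> ereal a" "a < r"
    and A1: "A1 \<in> sets m" "\<kappa> < measure m A1" "0 < \<kappa>"
  shows "\<exists>B\<in>sets m. 1 - \<kappa> \<le> measure m B \<and> (\<forall>x\<in>B. \<exists>y\<in>A1. d x y < r)"
proof -
  interpret Metric_space S d using mm by (simp add: mm_space_def)
  interpret prob_space m using mm by (simp add: mm_space_def)
  have sp: "space m = S" using mm by (simp add: mm_space_def)
  have A1S: "A1 \<subseteq> S" using sets.sets_into_space[OF A1(1)] sp by simp
  have ne: "A1 \<noteq> {}" using A1 by auto
  define h where "h x = Inf {d x y | y. y \<in> A1}" for x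
  have nes: "{d x y | y. y \<in> A1} \<noteq> {}" for x using ne by auto
  have bdd: "bdd_below {d x y | y. y \<in> A1}" if "x \<in> S" for x
    using that A1S by (intro bdd_belowI[of _ 0]) auto
  have hle: "h x \<le> d x y" if "x \<in> S" "y \<in> A1" for x y
    unfolding h_def using that bdd by (intro cInf_lower) auto
  have h0: "0 \<le> h x" if "x \<in> S" for x
    unfolding h_def using that A1S nes by (intro cInf_greatest) auto
  have hlip1: "h x \<le> h x' + d x x'" if "x \<in> S" "x' \<in> S" for x x'
  proof -
    have "h x - d x x' \<le> h x'"
      unfolding h_def[of x'] using nes
    proof (intro cInf_greatest)
      fix z assume "z \<in> {d x' y | y. y \<in> A1}"
      then obtain y where y: "y \<in> A1" "z = d x' y" by auto
      have "h x \<le> d x y" using hle that y by auto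
      also have "\<dots> \<le> d x x' + d x' y" using that y A1S triangle by auto
      finally show "h x - d x x' \<le> z" using y by simp
    qed auto
    then show ?thesis by simp
  qed
  have hlip: "\<bar>h x - h x'\<bar> \<le> d x x'" if "x \<in> S" "x' \<in> S" for x x'
    using hlip1[OF that] hlip1[OF that(2,1)] commute[of x x'] by auto
  have hm: "h \<in> borel_measurable m"
  proof (rule mm_meas_cont[OF mm], intro ballI allI impI)
    fix x e assume "x \<in> S" "(0::real) < e"
    then show "\<exists>\<delta>>0. \<forall>y\<in>S. d x y < \<delta> \<longrightarrow> \<bar>h y - h x\<bar> < e"
      using hlip by (intro exI[of _ e]) (force simp: commute)
  qed
  have "partial_diam (\<lambda>a b. \<bar>a - b\<bar>) (distr m borel h) (1 - \<kappa>) \<le> obs_diam S d m \<kappa>"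
    by (rule OD_ge[OF hm]) (use hlip in auto)
  also have "\<dots> < ereal r" using le_less_trans[OF k(1)] k(2) by simp
  finally obtain A where A: "A \<in> sets borel" "1 - \<kappa> \<le> measure (distr m borel h) A"
    "diam_of (\<lambda>a b. \<bar>a - b\<bar>) A < r"
    using PD_lt by fastforce
  define B where "B = h -` A \<inter> space m"
  have Bs: "B \<in> sets m" unfolding B_def using hm A(1) by measurable
  have mB: "1 - \<kappa> \<le> measure m B" using A(2) hm A(1) by (simp add: measure_distr B_def)
  have "B \<inter> A1 \<noteq> {}"
  proof
    assume "B \<inter> A1 = {}"
    then have "measure m (B \<union> A1) = measure m B + measure m A1"
      using Bs A1 by (simp add: finite_measure_Union)
    moreover have "measure m (B \<union> A1) \<le> 1" by (rule prob_le_1)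
    ultimately show False using mB A1 by linarith
  qed
  then obtain x0 where x0: "x0 \<in> B" "x0 \<in> A1" by blast
  have hx0: "h x0 = 0" using hle[of x0 x0] h0[of x0] x0 A1S by auto
  show ?thesis
  proof (intro bexI[OF _ Bs] conjI mB ballI)
    fix x assume x: "x \<in> B"
    have xS: "x \<in> S" using x sp B_def by auto
    have "ereal \<bar>h x - h x0\<bar> \<le> diam_of (\<lambda>a b. \<bar>a - b\<bar>) A"
      using x x0 B_def by (intro diam_le) auto
    also have "\<dots> < r" by (rule A(3))
    finally have "h x < r" using hx0 h0[OF xS] by simp
    then have "Inf {d x y | y. y \<in> A1} < r" by (simp add: h_def)
    then show "\<exists>y\<in>A1. d x y < r" using nes[of x] bdd[OF xS] by (auto simp: cInf_less_iff)
  qed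
qed


definition med :: "real measure \<Rightarrow> real" where "med \<mu> = Inf {t. 1/2 \<le> cdf \<mu> t}"

lemma med_props:
  assumes rd: "real_distribution \<mu>" and e: "0 < \<eta>"
  shows "1/2 \<le> cdf \<mu> (med \<mu> + \<eta>)" and "cdf \<mu> (med \<mu> - \<eta>) < 1/2"
proof -
  interpret real_distribution \<mu> by (rule rd)

  define K where "K = {t. 1/2 \<le> cdf \<mu> t}"
  have "eventually (\<lambda>t. cdf \<mu> t > 1/2) at_top"
    using order_tendstoD(1)[OF cdf_lim_at_top_prob, of "1/2"] by simp
  then obtain t0 where "cdf \<mu> t0 > 1/2" by (auto simp: eventually_at_top_linorder)
  then have "t0 \<in> K" unfolding K_def by simp
  then have ne: "K \<noteq> {}" by blast
  have "eventually (\<lambda>t. cdf \<mu> t < 1/2) at_bot"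
    using order_tendstoD(2)[OF cdf_lim_at_bot, of "1/2"] by simp
  then obtain N where N: "\<And>t. t \<le> N \<Longrightarrow> cdf \<mu> t < 1/2" by (auto simp: eventually_at_bot_linorder)
  have bdd: "bdd_below K"
  proof (rule bdd_belowI[of _ N])
    fix x assume "x \<in> K"
    then have "\<not> cdf \<mu> x < 1/2" unfolding K_def by simp
    then show "N \<le> x" using N[of x] by linarith
  qed
  have mK: "med \<mu> = Inf K" by (simp add: med_def K_def)
  have "Inf K < Inf K + \<eta>" using e by simp
  then have "\<exists>t\<in>K. t < Inf K + \<eta>" using cInf_less_iff[OF ne bdd] by blast
  then obtain t where t: "t \<in> K" "t < med \<mu> + \<eta>" using mK by auto
  then show "1/2 \<le> cdf \<mu> (med \<mu> + \<eta>)"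
    using cdf_nondecreasing[of t "med \<mu> + \<eta>"] unfolding K_def by auto
  show "cdf \<mu> (med \<mu> - \<eta>) < 1/2"
  proof (rule ccontr)
    assume "\<not> cdf \<mu> (med \<mu> - \<eta>) < 1/2"
    then have "med \<mu> - \<eta> \<in> K" unfolding K_def by simp
    then have "med \<mu> \<le> med \<mu> - \<eta>" using bdd unfolding med_def K_def[symmetric] by (rule cInf_lower)
    then show False using e by simp
  qed
qed

lemma LL:
  assumes mm: "mm_space S d m" and k: "0 < \<kappa>" "\<kappa> < 1/2" "obs_diam S d m \<kappa> \<le> ereal a" "a < r"
    and e: "0 < \<eta>"
    and g: "g \<in> borel_measurable m" "\<forall>x\<in>S. \<forall>x'\<in>S. \<bar>g x - g x'\<bar> \<le> \<phi> (d x x')"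
    and phi: "\<forall>s. 0 \<le> s \<longrightarrow> s \<le> r \<longrightarrow> \<phi> s \<le> 2 * \<phi> r"
  shows "1 - 2*\<kappa> \<le> measure m {x\<in>S. \<bar>g x - med (distr m borel g)\<bar> \<le> 2 * \<phi> r + \<eta>}"
proof -
  interpret Metric_space S d using mm by (simp add: mm_space_def)
  interpret prob_space m using mm by (simp add: mm_space_def)
  have sp: "space m = S" using mm by (simp add: mm_space_def)
  define \<mu> where "\<mu> = distr m borel g"
  define M where "M = med \<mu>"
  have rd: "real_distribution \<mu>" unfolding \<mu>_def using g(1) by (intro real_distribution_distr) simp
  define A1 where "A1 = g -` {..M+\<eta>} \<inter> space m"
  define A2 where "A2 = space m - g -` {..M-\<eta>} \<inter> space m"
  have A1s: "A1 \<in> sets m" unfolding A1_def using g(1) by measurable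
  have A2s: "A2 \<in> sets m" unfolding A2_def using g(1) by measurable
  have "measure m A1 = cdf \<mu> (M+\<eta>)" unfolding A1_def \<mu>_def cdf_def using g(1)
    by (simp add: measure_distr)
  then have mA1: "\<kappa> < measure m A1" using med_props(1)[OF rd e] k M_def by simp
  have "measure m A2 = 1 - cdf \<mu> (M-\<eta>)" unfolding A2_def \<mu>_def cdf_def using g(1)
    by (simp add: measure_distr prob_compl)
  then have mA2: "\<kappa> < measure m A2" using med_props(2)[OF rd e] k M_def by simp
  obtain B1 where B1: "B1 \<in> sets m" "1 - \<kappa> \<le> measure m B1" "\<forall>x\<in>B1. \<exists>y\<in>A1. d x y < r"
    using L0[OF mm k(3) k(4) A1s mA1 k(1)] by blast
  obtain B2 where B2: "B2 \<in> sets m" "1 - \<kappa> \<le> measure m B2" "\<forall>x\<in>B2. \<exists>y\<in>A2. d x y < r"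
    using L0[OF mm k(3) k(4) A2s mA2 k(1)] by blast
  have "measure m (B1 \<union> B2) = measure m B1 + measure m B2 - measure m (B1 \<inter> B2)"
    using B1(1) B2(1) by (intro measure_Un3) (auto simp: fmeasurable_eq_sets)
  moreover have "measure m (B1 \<union> B2) \<le> 1" by (rule prob_le_1)
  ultimately have mB: "1 - 2*\<kappa> \<le> measure m (B1 \<inter> B2)" using B1(2) B2(2) by linarith
  define C where "C = {x\<in>space m. \<bar>g x - M\<bar> \<le> 2 * \<phi> r + \<eta>}"
  have Cs: "C \<in> sets m" unfolding C_def using g(1) by measurable
  have sub: "B1 \<inter> B2 \<subseteq> C"
  proof
    fix x assume x: "x \<in> B1 \<inter> B2"
    have xS: "x \<in> S" using x B1(1) sets.sets_into_space sp by blast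
    obtain y1 where y1: "y1 \<in> A1" "d x y1 < r" using B1(3) x by blast
    obtain y2 where y2: "y2 \<in> A2" "d x y2 < r" using B2(3) x by blast
    have y1S: "y1 \<in> S" and y2S: "y2 \<in> S" using y1 y2 sp unfolding A1_def A2_def by auto
    have "\<phi> (d x y1) \<le> 2 * \<phi> r" using phi y1 xS y1S nonneg[of x y1] by auto
    moreover have "\<phi> (d x y2) \<le> 2 * \<phi> r" using phi y2 xS y2S nonneg[of x y2] by auto
    moreover have "\<bar>g x - g y1\<bar> \<le> \<phi> (d x y1)" "\<bar>g x - g y2\<bar> \<le> \<phi> (d x y2)"
      using g(2) xS y1S y2S by auto
    moreover have "g y1 \<le> M + \<eta>" "g y2 > M - \<eta>" using y1 y2 unfolding A1_def A2_def by auto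
    ultimately show "x \<in> C" unfolding C_def using xS sp by auto
  qed
  have "measure m (B1 \<inter> B2) \<le> measure m C"
    using sub Cs by (intro finite_measure_mono) auto
  then show ?thesis using mB unfolding C_def M_def \<mu>_def sp by simp
qed


definition z0 :: "real \<Rightarrow> real \<Rightarrow> real" where "z0 x y = 0"

lemma F2_D: "F \<in> F2 \<Longrightarrow> Metric_space (S::real set) dS \<Longrightarrow> Metric_space (T::real set) dT \<Longrightarrow>
   Metric_space (S \<times> T) (prod_metric F dS dT)"
  unfolding F2_def by blast

lemma ms0: "Metric_space {0::real} z0"
  by (unfold_locales) (auto simp: z0_def)

lemma ms3:
  assumes "0 < s" "0 < r" "s \<le> 2*r"
  shows "Metric_space {0,1,2::real} (\<lambda>x y. if x = y then 0 else if x = 1 \<or> y = 1 then r else s)"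
  using assms by (unfold_locales) auto

lemma F00: assumes "F \<in> F2" shows "F 0 0 = 0"
proof -
  interpret Metric_space "{0::real} \<times> {0::real}" "prod_metric F z0 z0"
    by (rule F2_D[OF assms ms0 ms0])
  show ?thesis using mdist_zero[of "(0,0)"] by (simp add: prod_metric_def z0_def)
qed

lemma Fnn: "F \<in> F2 \<Longrightarrow> 0 \<le> s \<Longrightarrow> 0 \<le> t \<Longrightarrow> 0 \<le> F s t"
  unfolding F2_def by blast

lemma Fcont: "F \<in> F2 \<Longrightarrow> continuous_on ({0..} \<times> {0..}) (\<lambda>(s,t). F s t)"
  unfolding F2_def by blast

lemma F_tri1:
  assumes F: "F \<in> F2" and s: "0 \<le> s" "s \<le> 2*r" and r: "0 < r"
  shows "F s 0 \<le> 2 * F r 0"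
proof (cases "s = 0")
  case True then show ?thesis using F00[OF F] Fnn[OF F, of r 0] r by simp
next
  case False
  define d3 where "d3 = (\<lambda>x y::real. if x = y then 0 else if x = 1 \<or> y = 1 then r else s)"
  have ms: "Metric_space ({0,1,2::real} \<times> {0::real}) (prod_metric F d3 z0)"
    unfolding d3_def by (rule F2_D[OF F ms3 ms0]) (use s r False in auto)
  have "prod_metric F d3 z0 (0::real,0::real) (2,0) \<le> prod_metric F d3 z0 (0,0) (1,0) + prod_metric F d3 z0 (1,0) (2,0)"
    by (rule Metric_space.triangle[OF ms]) auto
  then show ?thesis by (simp add: prod_metric_def d3_def z0_def)
qed

lemma F_tri2:
  assumes F: "F \<in> F2" and s: "0 \<le> s" "s \<le> 2*r" and r: "0 < r"
  shows "F 0 s \<le> 2 * F 0 r"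
proof (cases "s = 0")
  case True then show ?thesis using F00[OF F] Fnn[OF F, of 0 r] r by simp
next
  case False
  define d3 where "d3 = (\<lambda>x y::real. if x = y then 0 else if x = 1 \<or> y = 1 then r else s)"
  have ms: "Metric_space ({0::real} \<times> {0,1,2::real}) (prod_metric F z0 d3)"
    unfolding d3_def by (rule F2_D[OF F ms0 ms3]) (use s r False in auto)
  have "prod_metric F z0 d3 (0::real,0::real) (0,2) \<le> prod_metric F z0 d3 (0,0) (0,1) + prod_metric F z0 d3 (0,1) (0,2)"
    by (rule Metric_space.triangle[OF ms]) auto
  then show ?thesis by (simp add: prod_metric_def d3_def z0_def)
qed


lemma OD_fin:
  assumes mm: "mm_space S d m" and k: "0 < \<kappa>"
  shows "\<exists>R. obs_diam S d m \<kappa> \<le> ereal R"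
proof -
  interpret Metric_space S d using mm by (simp add: mm_space_def)
  interpret prob_space m using mm by (simp add: mm_space_def)
  have sp: "space m = S" using mm by (simp add: mm_space_def)
  obtain x0 where x0: "x0 \<in> S" using not_empty sp by auto
  have hm: "(\<lambda>x. d x0 x) \<in> borel_measurable m"
  proof (rule mm_meas_cont[OF mm], intro ballI allI impI)
    fix x e assume x: "x \<in> S" "(0::real) < e"
    have "\<bar>d x0 y - d x0 x\<bar> \<le> d x y" if "y \<in> S" for y
      using triangle[OF x0 x(1) that] triangle[OF x0 that x(1)] commute[of x y] by auto
    then show "\<exists>\<delta>>0. \<forall>y\<in>S. d x y < \<delta> \<longrightarrow> \<bar>d x0 y - d x0 x\<bar> < e"
      using x by (intro exI[of _ e]) force
  qed
  define B where "B n = {x\<in>space m. d x0 x \<le> real n}" for n :: nat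
  have Bs: "range B \<subseteq> sets m" unfolding B_def using hm by auto
  have inc: "incseq B" unfolding B_def incseq_def by auto
  have UB: "(\<Union>n. B n) = space m"
    unfolding B_def by (auto intro: real_arch_simple)
  have "(\<lambda>n. measure m (B n)) \<longlonglongrightarrow> measure m (\<Union>n. B n)"
    by (rule finite_Lim_measure_incseq[OF Bs inc])
  then have "(\<lambda>n. measure m (B n)) \<longlonglongrightarrow> 1" using UB prob_space by simp
  then have "eventually (\<lambda>n. measure m (B n) > 1 - \<kappa>) sequentially"
    using k by (intro order_tendstoD(1)) auto
  then obtain n where n: "measure m (B n) > 1 - \<kappa>" by (auto simp: eventually_sequentially)
  show ?thesis
  proof (intro exI[of _ "2 * real n"] OD_le)
    fix f :: "'a \<Rightarrow> real" assume f: "f \<in> borel_measurable m" "\<forall>x\<in>S. \<forall>y\<in>S. \<bar>f x - f y\<bar> \<le> d x y"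
    define I where "I = {f x0 - real n .. f x0 + real n}"
    have "B n \<subseteq> f -` I \<inter> space m"
    proof
      fix x assume x: "x \<in> B n"
      then have "x \<in> S" "d x0 x \<le> real n" unfolding B_def sp by auto
      then show "x \<in> f -` I \<inter> space m" using f(2) x0 sp unfolding I_def
        by (force simp: commute[of x0 x] abs_le_iff)
    qed
    then have "measure m (B n) \<le> measure m (f -` I \<inter> space m)"
      using f(1) by (intro finite_measure_mono) (auto simp: I_def)
    also have "\<dots> = measure (distr m borel f) I" using f(1) by (simp add: measure_distr I_def)
    finally have "1 - \<kappa> \<le> measure (distr m borel f) I" using n by simp
    then have "partial_diam (\<lambda>a b. \<bar>a - b\<bar>) (distr m borel f) (1 - \<kappa>) \<le> diam_of (\<lambda>a b. \<bar>a - b\<bar>) I"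
      by (intro PD_le) (auto simp: I_def)
    also have "\<dots> \<le> ereal (2 * real n)" unfolding I_def by (rule diam_interval) simp
    finally show "partial_diam (\<lambda>a b. \<bar>a - b\<bar>) (distr m borel f) (1 - \<kappa>) \<le> ereal (2 * real n)" .
  qed
qed


lemma Fc1: assumes F: "F \<in> F2" shows "continuous_on {0..} (\<lambda>s. F s 0)"
proof -
  have "continuous_on {0..} ((\<lambda>(s,t). F s t) \<circ> (\<lambda>s. (s, 0::real)))"
    by (rule continuous_on_compose[OF continuous_on_Pair[OF continuous_on_id continuous_on_const]
          continuous_on_subset[OF Fcont[OF F]]]) auto
  then show ?thesis by (simp add: o_def)
qed

lemma Fc2: assumes F: "F \<in> F2" shows "continuous_on {0..} (\<lambda>t. F 0 t)"
proof -
  have "continuous_on {0..} ((\<lambda>(s,t). F s t) \<circ> (\<lambda>t. (0::real, t)))"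
    by (rule continuous_on_compose[OF continuous_on_Pair[OF continuous_on_const continuous_on_id]
          continuous_on_subset[OF Fcont[OF F]]]) auto
  then show ?thesis by (simp add: o_def)
qed

lemma cont_pt:
  assumes "continuous_on {0..} (g::real\<Rightarrow>real)" "0 \<le> a" "0 < e"
  shows "\<exists>\<delta>>0. \<forall>s. 0 \<le> s \<longrightarrow> \<bar>s - a\<bar> < \<delta> \<longrightarrow> \<bar>g s - g a\<bar> < e"
proof -
  have "\<forall>x\<in>{0..}. \<forall>\<epsilon>>0. \<exists>\<delta>>0. \<forall>x'\<in>{0..}. \<bar>x' - x\<bar> < \<delta> \<longrightarrow> \<bar>g x' - g x\<bar> < \<epsilon>"
    using assms(1) unfolding continuous_on_iff dist_real_def .
  then obtain \<delta> where "\<delta> > 0" "\<forall>x'\<in>{0..}. \<bar>x' - a\<bar> < \<delta> \<longrightarrow> \<bar>g x' - g a\<bar> < e"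
    using assms(2,3) by force
  then show ?thesis by auto
qed

lemma cdf_distr: "g \<in> borel_measurable m \<Longrightarrow> cdf (distr m borel g) t = measure m {x\<in>space m. g x \<le> t}"
  unfolding cdf_def by (simp add: measure_distr vimage_def Int_def conj_commute)

lemma med_lip:
  assumes rd1: "real_distribution \<mu>1" and rd2: "real_distribution \<mu>2"
    and c: "\<And>t. cdf \<mu>2 t \<le> cdf \<mu>1 (t + c)"
  shows "med \<mu>1 \<le> med \<mu>2 + c"
proof (rule ccontr)
  assume nt: "\<not> ?thesis"
  define \<delta> where "\<delta> = (med \<mu>1 - med \<mu>2 - c) / 2"
  have \<delta>: "0 < \<delta>" using nt by (simp add: \<delta>_def)
  have "1/2 \<le> cdf \<mu>2 (med \<mu>2 + \<delta>)" by (rule med_props(1)[OF rd2 \<delta>])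
  also have "\<dots> \<le> cdf \<mu>1 (med \<mu>2 + \<delta> + c)" by (rule c)
  also have "med \<mu>2 + \<delta> + c = med \<mu>1 - \<delta>" by (simp add: \<delta>_def field_simps)
  finally show False using med_props(2)[OF rd1 \<delta>] by simp
qed


lemma keyK:
  assumes mmX: "mm_space S dX mX" and mmY: "mm_space T dY mY" and F: "F \<in> F2"
    and k: "0 < \<kappa>" "\<kappa> < 1/2" "0 < \<kappa>'" "\<kappa>' < 1/2"
    and a: "obs_diam S dX mX \<kappa> \<le> ereal a" "0 \<le> a" "a < r"
    and b: "obs_diam T dY mY \<kappa>' \<le> ereal b" "0 \<le> b" "b < r'"
    and e: "0 < \<eta>"
    and f: "f \<in> borel_measurable (mX \<Otimes>\<^sub>M mY)"
      "\<forall>p\<in>S \<times> T. \<forall>q\<in>S \<times> T. \<bar>f p - f q\<bar> \<le> prod_metric F dX dY p q"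
  shows "partial_diam (\<lambda>a b. \<bar>a - b\<bar>) (distr (mX \<Otimes>\<^sub>M mY) borel f) (1 - 2 * (\<kappa> + \<kappa>'))
           \<le> ereal (4 * F r 0 + 4 * F 0 r' + 4 * \<eta>)"
proof -
  interpret X: Metric_space S dX using mmX by (simp add: mm_space_def)
  interpret Y: Metric_space T dY using mmY by (simp add: mm_space_def)
  have pX: "prob_space mX" using mmX by (simp add: mm_space_def)
  have pY: "prob_space mY" using mmY by (simp add: mm_space_def)
  interpret pX: prob_space mX by (rule pX)
  interpret pY: prob_space mY by (rule pY)
  interpret P: pair_prob_space mX mY
    unfolding pair_prob_space_def pair_sigma_finite_def using pX pY
    by (auto intro: prob_space_imp_sigma_finite)
  have spX: "space mX = S" using mmX by (simp add: mm_space_def)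
  have spY: "space mY = T" using mmY by (simp add: mm_space_def)
  have sp: "space (mX \<Otimes>\<^sub>M mY) = S \<times> T" by (simp add: space_pair_measure spX spY)
  have r0: "0 < r" "0 < r'" using a b by auto
  define M where "M y = med (distr mX borel (\<lambda>x. f (x,y)))" for y
  have gm: "(\<lambda>x. f (x,y)) \<in> borel_measurable mX" if "y \<in> T" for y
    by (rule measurable_Pair1[OF f(1)]) (simp add: spY that)
  have glip: "\<forall>x\<in>S. \<forall>x'\<in>S. \<bar>f (x,y) - f (x',y)\<bar> \<le> (\<lambda>s. F s 0) (dX x x')" if "y \<in> T" for y
    using f(2) that by (force simp: prod_metric_def)
  have phi1: "\<forall>s. 0 \<le> s \<longrightarrow> s \<le> r \<longrightarrow> (\<lambda>s. F s 0) s \<le> 2 * (\<lambda>s. F s 0) r"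
    using F_tri1[OF F] r0 by auto
  have Cy: "1 - 2*\<kappa> \<le> measure mX {x\<in>S. \<bar>f (x,y) - M y\<bar> \<le> 2 * F r 0 + \<eta>}" if "y \<in> T" for y
    using LL[OF mmX k(1) k(2) a(1) a(3) e gm[OF that] glip[OF that] phi1] by (simp add: M_def)
  have rd: "real_distribution (distr mX borel (\<lambda>x. f (x,y)))" if "y \<in> T" for y
    using gm[OF that] by (intro pX.real_distribution_distr) simp
  have Mlip1: "M y \<le> M y' + F 0 (dY y y')" if y: "y \<in> T" "y' \<in> T" for y y'
    unfolding M_def
  proof (rule med_lip[OF rd[OF y(1)] rd[OF y(2)]])
    fix t
    have "measure mX {x\<in>space mX. f (x,y') \<le> t} \<le> measure mX {x\<in>space mX. f (x,y) \<le> t + F 0 (dY y y')}"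
    proof (rule pX.finite_measure_mono)
      show "{x\<in>space mX. f (x,y) \<le> t + F 0 (dY y y')} \<in> sets mX" using gm[OF y(1)] by measurable
      show "{x\<in>space mX. f (x,y') \<le> t} \<subseteq> {x\<in>space mX. f (x,y) \<le> t + F 0 (dY y y')}"
      proof safe
        fix x assume x: "x \<in> space mX" "f (x,y') \<le> t"
        have "\<bar>f (x,y) - f (x,y')\<bar> \<le> prod_metric F dX dY (x,y) (x,y')"
          using f(2) x y spX by auto
        then show "f (x,y) \<le> t + F 0 (dY y y')" using x spX by (simp add: prod_metric_def)
      qed
    qed
    then show "cdf (distr mX borel (\<lambda>x. f (x, y'))) t \<le> cdf (distr mX borel (\<lambda>x. f (x, y))) (t + F 0 (dY y y'))"
      by (simp add: cdf_distr gm y)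
  qed
  have Mlip: "\<forall>y\<in>T. \<forall>y'\<in>T. \<bar>M y - M y'\<bar> \<le> (\<lambda>t. F 0 t) (dY y y')"
    using Mlip1 Y.commute by (force simp: abs_le_iff)
  have Mm: "M \<in> borel_measurable mY"
  proof (rule mm_meas_cont[OF mmY], intro ballI allI impI)
    fix y and e :: real assume y: "y \<in> T" "0 < e"
    obtain \<delta> where \<delta>: "\<delta> > 0" "\<forall>s. 0 \<le> s \<longrightarrow> \<bar>s - 0\<bar> < \<delta> \<longrightarrow> \<bar>F 0 s - F 0 0\<bar> < e"
      using cont_pt[OF Fc2[OF F], of 0 e] y by auto
    show "\<exists>\<delta>>0. \<forall>y'\<in>T. dY y y' < \<delta> \<longrightarrow> \<bar>M y' - M y\<bar> < e"
    proof (intro exI[of _ \<delta>] conjI ballI impI)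
      fix y' assume y': "y' \<in> T" "dY y y' < \<delta>"
      have "\<bar>M y' - M y\<bar> \<le> F 0 (dY y y')" using Mlip y y' Y.commute by metis
      also have "\<dots> < e" using \<delta>(2)[rule_format, OF Y.nonneg[of y y']] y' F00[OF F] by auto
      finally show "\<bar>M y' - M y\<bar> < e" .
    qed (rule \<delta>(1))
  qed
  have phi2: "\<forall>s. 0 \<le> s \<longrightarrow> s \<le> r' \<longrightarrow> (\<lambda>t. F 0 t) s \<le> 2 * (\<lambda>t. F 0 t) r'"
    using F_tri2[OF F] r0 by auto
  define N where "N = med (distr mY borel M)"
  define c1 where "c1 = 2 * F r 0 + \<eta>"
  define c2 where "c2 = 2 * F 0 r' + \<eta>"
  define D where "D = {y\<in>space mY. \<bar>M y - N\<bar> \<le> c2}"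
  have mD: "1 - 2*\<kappa>' \<le> measure mY D"
    using LL[OF mmY k(3) k(4) b(1) b(3) e Mm Mlip phi2] by (simp add: D_def N_def c2_def spY)
  note Mm[measurable] f(1)[measurable]
  have Ds: "D \<in> sets mY" unfolding D_def by measurable
  define E where "E = {p\<in>space (mX \<Otimes>\<^sub>M mY). \<bar>f p - M (snd p)\<bar> \<le> c1 \<and> \<bar>M (snd p) - N\<bar> \<le> c2}"
  have Es: "E \<in> sets (mX \<Otimes>\<^sub>M mY)" unfolding E_def by measurable
  have k1: "0 \<le> 1 - 2*\<kappa>" "0 \<le> 1 - 2*\<kappa>'" using k by auto
  have "ennreal ((1 - 2*\<kappa>) * (1 - 2*\<kappa>')) = ennreal (1 - 2*\<kappa>) * ennreal (1 - 2*\<kappa>')"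
    using k1 by (simp add: ennreal_mult)
  also have "\<dots> \<le> ennreal (1 - 2*\<kappa>) * emeasure mY D"
    using mD by (intro mult_left_mono) (auto simp: pY.emeasure_eq_measure ennreal_leI)
  also have "\<dots> = (\<integral>\<^sup>+y. ennreal (1 - 2*\<kappa>) * indicator D y \<partial>mY)"
    using Ds by (simp add: nn_integral_cmult_indicator)
  also have "\<dots> \<le> (\<integral>\<^sup>+y. emeasure mX ((\<lambda>x. (x, y)) -` E) \<partial>mY)"
  proof (rule nn_integral_mono)
    fix y assume y: "y \<in> space mY"
    show "ennreal (1 - 2*\<kappa>) * indicator D y \<le> emeasure mX ((\<lambda>x. (x, y)) -` E)"
    proof (cases "y \<in> D")
      case True
      then have "(\<lambda>x. (x, y)) -` E = {x\<in>S. \<bar>f (x,y) - M y\<bar> \<le> 2 * F r 0 + \<eta>}"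
        using y unfolding E_def D_def c1_def by (auto simp: sp spY)
      then have "emeasure mX ((\<lambda>x. (x, y)) -` E) = ennreal (measure mX {x\<in>S. \<bar>f (x,y) - M y\<bar> \<le> 2 * F r 0 + \<eta>})"
        by (simp add: pX.emeasure_eq_measure)
      moreover have "1 - 2*\<kappa> \<le> measure mX {x\<in>S. \<bar>f (x,y) - M y\<bar> \<le> 2 * F r 0 + \<eta>}"
        using Cy y spY by simp
      ultimately show ?thesis using True by (simp add: ennreal_leI)
    qed simp
  qed
  also have "\<dots> = emeasure (mX \<Otimes>\<^sub>M mY) E" by (rule P.emeasure_pair_measure_alt2[OF Es, symmetric])
  also have "\<dots> = ennreal (measure (mX \<Otimes>\<^sub>M mY) E)" by (rule P.emeasure_eq_measure)
  finally have "(1 - 2*\<kappa>) * (1 - 2*\<kappa>') \<le> measure (mX \<Otimes>\<^sub>M mY) E"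
    by (simp add: ennreal_le_iff)
  moreover have "1 - 2 * (\<kappa> + \<kappa>') \<le> (1 - 2*\<kappa>) * (1 - 2*\<kappa>')"
    using k by (simp add: algebra_simps)
  ultimately have mE: "1 - 2 * (\<kappa> + \<kappa>') \<le> measure (mX \<Otimes>\<^sub>M mY) E" by linarith
  define I where "I = {N - (c1 + c2) .. N + (c1 + c2)}"
  have "E \<subseteq> f -` I \<inter> space (mX \<Otimes>\<^sub>M mY)" unfolding E_def I_def by auto
  then have "measure (mX \<Otimes>\<^sub>M mY) E \<le> measure (mX \<Otimes>\<^sub>M mY) (f -` I \<inter> space (mX \<Otimes>\<^sub>M mY))"
    by (intro P.finite_measure_mono) (auto simp: I_def)
  also have "\<dots> = measure (distr (mX \<Otimes>\<^sub>M mY) borel f) I" by (simp add: measure_distr I_def)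
  finally have "1 - 2 * (\<kappa> + \<kappa>') \<le> measure (distr (mX \<Otimes>\<^sub>M mY) borel f) I" using mE by linarith
  then have "partial_diam (\<lambda>a b. \<bar>a - b\<bar>) (distr (mX \<Otimes>\<^sub>M mY) borel f) (1 - 2 * (\<kappa> + \<kappa>'))
       \<le> diam_of (\<lambda>a b. \<bar>a - b\<bar>) I"
    by (intro PD_le) (auto simp: I_def)
  also have "\<dots> \<le> ereal (2 * (c1 + c2))" unfolding I_def
    by (rule diam_interval) (use Fnn[OF F, of r 0] Fnn[OF F, of 0 r'] r0 e in \<open>simp add: c1_def c2_def\<close>)
  also have "2 * (c1 + c2) = 4 * F r 0 + 4 * F 0 r' + 4 * \<eta>" by (simp add: c1_def c2_def)
  finally show ?thesis .
qed


theorem mainTheorem9: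
  fixes S :: "'a set" and dX :: "'a \<Rightarrow> 'a \<Rightarrow> real" and mX :: "'a measure"
    and T :: "'b set" and dY :: "'b \<Rightarrow> 'b \<Rightarrow> real" and mY :: "'b measure"
    and F :: "real \<Rightarrow> real \<Rightarrow> real" and \<kappa> \<kappa>' :: real
  assumes "mm_space S dX mX" and "mm_space T dY mY" and "F \<in> F2"
    and "0 < \<kappa>" and "\<kappa> < 1" and "0 < \<kappa>'" and "\<kappa>' < 1/4"
  shows "obs_diam (S \<times> T) (prod_metric F dX dY) (mX \<Otimes>\<^sub>M mY) (2 * (\<kappa> + \<kappa>'))
           \<le> 4 * ereal (F (real_of_ereal (obs_diam S dX mX \<kappa>)) 0)
             + 8 * ereal (F 0 (real_of_ereal (obs_diam T dY mY \<kappa>')))"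
proof -
  note mmX = assms(1) and mmY = assms(2) and F = assms(3)
  define a where "a = real_of_ereal (obs_diam S dX mX \<kappa>)"
  define b where "b = real_of_ereal (obs_diam T dY mY \<kappa>')"
  have OX0: "0 \<le> obs_diam S dX mX \<kappa>" by (rule OD_ge0[OF mmX])
  have OY0: "0 \<le> obs_diam T dY mY \<kappa>'" by (rule OD_ge0[OF mmY])
  have a0: "0 \<le> a" unfolding a_def using OX0 by (simp add: real_of_ereal_pos)
  have b0: "0 \<le> b" unfolding b_def using OY0 by (simp add: real_of_ereal_pos)
  have rhs: "4 * ereal (F a 0) + 8 * ereal (F 0 b) = ereal (4 * F a 0 + 8 * F 0 b)" by simp
  have rhs0: "0 \<le> 4 * F a 0 + 8 * F 0 b" using Fnn[OF F, of a 0] Fnn[OF F, of 0 b] a0 b0 by simp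
  have main: "obs_diam (S \<times> T) (prod_metric F dX dY) (mX \<Otimes>\<^sub>M mY) (2 * (\<kappa> + \<kappa>'))
           \<le> ereal (4 * F a 0 + 8 * F 0 b)"
  proof (cases "\<kappa> + \<kappa>' < 1/2")
    case False
    have "obs_diam (S \<times> T) (prod_metric F dX dY) (mX \<Otimes>\<^sub>M mY) (2 * (\<kappa> + \<kappa>')) \<le> 0"
    proof (rule OD_le)
      fix f :: "'a \<times> 'b \<Rightarrow> real"
      have "partial_diam (\<lambda>a b. \<bar>a - b\<bar>) (distr (mX \<Otimes>\<^sub>M mY) borel f) (1 - 2 * (\<kappa> + \<kappa>'))
          \<le> diam_of (\<lambda>a b. \<bar>a - b\<bar>) {}"
        by (rule PD_le) (use False in auto)
      also have "\<dots> = 0" by (simp add: diam_of_def)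
      finally show "partial_diam (\<lambda>a b. \<bar>a - b\<bar>) (distr (mX \<Otimes>\<^sub>M mY) borel f) (1 - 2 * (\<kappa> + \<kappa>')) \<le> 0" .
    qed
    also have "0 \<le> ereal (4 * F a 0 + 8 * F 0 b)" using rhs0 by simp
    finally show ?thesis .
  next
    case True
    have k: "\<kappa> < 1/2" "\<kappa>' < 1/2" using True assms by auto
    obtain R where R: "obs_diam S dX mX \<kappa> \<le> ereal R" using OD_fin[OF mmX assms(4)] by blast
    obtain R' where R': "obs_diam T dY mY \<kappa>' \<le> ereal R'" using OD_fin[OF mmY assms(6)] by blast
    have Xa: "obs_diam S dX mX \<kappa> = ereal a"
      using OX0 R unfolding a_def by (cases "obs_diam S dX mX \<kappa>") auto
    have Yb: "obs_diam T dY mY \<kappa>' = ereal b"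
      using OY0 R' unfolding b_def by (cases "obs_diam T dY mY \<kappa>'") auto
    have key: "obs_diam (S \<times> T) (prod_metric F dX dY) (mX \<Otimes>\<^sub>M mY) (2 * (\<kappa> + \<kappa>'))
           \<le> ereal (4 * F r 0 + 4 * F 0 r' + 4 * \<eta>)" if "a < r" "b < r'" "0 < \<eta>" for r r' \<eta>
    proof (rule OD_le)
      fix f assume "f \<in> borel_measurable (mX \<Otimes>\<^sub>M mY)"
        "\<forall>x\<in>S \<times> T. \<forall>y\<in>S \<times> T. \<bar>f x - f y\<bar> \<le> prod_metric F dX dY x y"
      then show "partial_diam (\<lambda>a b. \<bar>a - b\<bar>) (distr (mX \<Otimes>\<^sub>M mY) borel f) (1 - 2 * (\<kappa> + \<kappa>'))
           \<le> ereal (4 * F r 0 + 4 * F 0 r' + 4 * \<eta>)"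
        using keyK[OF mmX mmY F assms(4) k(1) assms(6) k(2) _ a0 that(1) _ b0 that(2) that(3)] Xa Yb
        by simp
    qed
    show ?thesis
    proof (rule ereal_le_epsilon2)
      fix e :: real assume e: "0 < e"
      obtain \<delta>1 where d1: "\<delta>1 > 0" "\<forall>s. 0 \<le> s \<longrightarrow> \<bar>s - a\<bar> < \<delta>1 \<longrightarrow> \<bar>F s 0 - F a 0\<bar> < e/12"
        using cont_pt[OF Fc1[OF F] a0, of "e/12"] e by auto
      obtain \<delta>2 where d2: "\<delta>2 > 0" "\<forall>s. 0 \<le> s \<longrightarrow> \<bar>s - b\<bar> < \<delta>2 \<longrightarrow> \<bar>F 0 s - F 0 b\<bar> < e/12"
        using cont_pt[OF Fc2[OF F] b0, of "e/12"] e by auto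
      have "\<bar>F (a + \<delta>1/2) 0 - F a 0\<bar> < e/12" using d1(2) d1(1) a0 by auto
      then have 1: "F (a + \<delta>1/2) 0 < F a 0 + e/12" by linarith
      have "\<bar>F 0 (b + \<delta>2/2) - F 0 b\<bar> < e/12" using d2(2) d2(1) b0 by auto
      then have 2: "F 0 (b + \<delta>2/2) < F 0 b + e/12" by linarith
      have "obs_diam (S \<times> T) (prod_metric F dX dY) (mX \<Otimes>\<^sub>M mY) (2 * (\<kappa> + \<kappa>'))
           \<le> ereal (4 * F (a + \<delta>1/2) 0 + 4 * F 0 (b + \<delta>2/2) + 4 * (e/12))"
        by (rule key) (use d1(1) d2(1) e in auto)
      also have "\<dots> \<le> ereal (4 * F a 0 + 8 * F 0 b) + ereal e"
        using 1 2 Fnn[OF F, of 0 b] b0 by simp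
      finally show "obs_diam (S \<times> T) (prod_metric F dX dY) (mX \<Otimes>\<^sub>M mY) (2 * (\<kappa> + \<kappa>'))
           \<le> ereal (4 * F a 0 + 8 * F 0 b) + ereal e" .
    qed
  qed
  then show ?thesis unfolding rhs[symmetric] unfolding a_def b_def .
qed

end
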